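(* Let $n\ge1$ and $\gamma\in PSL(n+1,\mathbb{C})$ have a lift $\widetilde\gamma\in SL(n+1,\mathbb{C})$ which is diagonalizable and all of whose eigenvalues have modulus $1$. Then $\Lambda_{Kul}(\langle\gamma\rangle)=\emptyset$ if $\gamma$ has finite order, and $\Lambda_{Kul}(\langle\gamma\rangle)=\mathbb{P}^n_{\mathbb{C}}$ if $\gamma$ has infinite order.
   Context: For $\Gamma\subset PSL(n+1,\mathbb{C})$: a cluster point of $\Gamma z$ is a limit of $g_mz$ with pairwise distinct $g_m\in\Gamma$; $\Lambda(\Gamma)$ is the closure of the union of cluster points of $\Gamma z$ over all $z$; $L_2(\Gamma)$ is the closure of the union, over compact $K\subset\mathbb{P}^n_{\mathbb{C}}\setminus\Lambda(\Gamma)$, of cluster points of $\Gamma K$ (limits of $g_mk_m$, $g_m$ pairwise distinct, $k_m\in K$); $\Lambda_{Kul}(\Gamma)=\Lambda(\Gamma)\cup L_2(\Gamma)$. *)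

theory Defs
  imports "HOL-Analysis.Analysis"
begin

(* Complex projective space P^n_C, with C^{n+1} = complex^'n  (so n+1 = CARD('n)).
   A point of P^n is a complex line through 0, i.e. the set of complex multiples of a
   nonzero vector. *)

definition cline :: "complex^'n \<Rightarrow> (complex^'n) set" where
  "cline v = {c *s v | c. True}"

definition projspace :: "(complex^'n) set set" where
  "projspace = {cline v | v. v \<noteq> 0}"

(* quotient topology of (C^{n+1} - {0}) -> P^n *)
definition proj_topology :: "(complex^'n) set topology" where
  "proj_topology = topology (\<lambda>U. U \<subseteq> projspace \<and> open {v. v \<noteq> 0 \<and> cline v \<in> U})"

primrec mpow :: "complex^'n^'n \<Rightarrow> nat \<Rightarrow> complex^'n^'n" where
  "mpow A 0 = mat 1"
| "mpow A (Suc k) = A ** mpow A k"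

definition mzpow :: "complex^'n^'n \<Rightarrow> int \<Rightarrow> complex^'n^'n" where
  "mzpow A k = (if 0 \<le> k then mpow A (nat k) else mpow (matrix_inv A) (nat (- k)))"

(* PSL(n+1,C): classes of SL(n+1,C) modulo the centre {c I | c^(n+1) = 1} *)
definition psl_class :: "complex^'n^'n \<Rightarrow> (complex^'n^'n) set" where
  "psl_class M = {mat c ** M | c. c ^ CARD('n) = 1}"

definition PSL :: "(complex^'n^'n) set set" where
  "PSL = {psl_class M | M. det M = 1}"

definition psl_lift :: "(complex^'n^'n) set \<Rightarrow> complex^'n^'n" where
  "psl_lift g = (SOME M. det M = 1 \<and> psl_class M = g)"

definition psl_one :: "(complex^'n^'n) set" where
  "psl_one = psl_class (mat 1)"

definition psl_zpow :: "(complex^'n^'n) set \<Rightarrow> int \<Rightarrow> (complex^'n^'n) set" where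
  "psl_zpow g k = psl_class (mzpow (psl_lift g) k)"

definition cyclic_subgroup :: "(complex^'n^'n) set \<Rightarrow> (complex^'n^'n) set set" where
  "cyclic_subgroup g = {psl_zpow g k | k. True}"

definition psl_finite_order :: "(complex^'n^'n) set \<Rightarrow> bool" where
  "psl_finite_order g \<longleftrightarrow> (\<exists>k::nat. k > 0 \<and> psl_class (mpow (psl_lift g) k) = psl_one)"

definition psl_act :: "(complex^'n^'n) set \<Rightarrow> (complex^'n) set \<Rightarrow> (complex^'n) set" where
  "psl_act g p = (\<lambda>v. (SOME M. M \<in> g) *v v) ` p"

definition cluster_points :: "(complex^'n^'n) set set \<Rightarrow> (complex^'n) set set \<Rightarrow> (complex^'n) set set" where
  "cluster_points \<Gamma> K = {p. \<exists>g k. (\<forall>m. g m \<in> \<Gamma>) \<and> inj g \<and> (\<forall>m. k m \<in> K) \<and>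
       limitin proj_topology (\<lambda>m. psl_act (g m) (k m)) p sequentially}"

definition Lambda_set :: "(complex^'n^'n) set set \<Rightarrow> (complex^'n) set set" where
  "Lambda_set \<Gamma> = proj_topology closure_of (\<Union>z\<in>projspace. cluster_points \<Gamma> {z})"

definition L2_set :: "(complex^'n^'n) set set \<Rightarrow> (complex^'n) set set" where
  "L2_set \<Gamma> = proj_topology closure_of
     (\<Union>{cluster_points \<Gamma> K | K. compactin proj_topology K \<and> K \<subseteq> projspace - Lambda_set \<Gamma>})"

definition Kulkarni_limit_set :: "(complex^'n^'n) set set \<Rightarrow> (complex^'n) set set" where
  "Kulkarni_limit_set \<Gamma> = Lambda_set \<Gamma> \<union> L2_set \<Gamma>"

definition mat_diagonalizable :: "complex^'n^'n \<Rightarrow> bool" where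
  "mat_diagonalizable A \<longleftrightarrow> (\<exists>(P::complex^'n^'n) (D::complex^'n^'n). invertible P \<and> (\<forall>i j. i \<noteq> j \<longrightarrow> D $ i $ j = 0) \<and>
       A = P ** D ** matrix_inv P)"

definition mat_eigenvalue :: "complex^'n^'n \<Rightarrow> complex \<Rightarrow> bool" where
  "mat_eigenvalue A c \<longleftrightarrow> (\<exists>v. v \<noteq> 0 \<and> A *v v = c *s v)"

end

theory Submission
  imports Defs
begin


lemma mat_mult_eq: "mat c ** (X::complex^'n^'n) = (\<chi> i j. c * X$i$j)"
proof -
  have "\<And>i j. (\<Sum>k\<in>UNIV. (if i = k then c else 0) * X$k$j) = c * X$i$j"
    by (simp add: if_distrib[where f="\<lambda>x. x * _"] sum.delta cong: if_cong)
  then show ?thesis by (simp add: matrix_matrix_mult_def mat_def vec_eq_iff)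
qed

lemma mult_mat_eq: "(X::complex^'n^'n) ** mat c = (\<chi> i j. X$i$j * c)"
proof -
  have "\<And>i j. (\<Sum>k\<in>UNIV. X$i$k * (if k = j then c else 0)) = X$i$j * c"
    by (simp add: if_distrib[where f="\<lambda>x. _ * x"] sum.delta' cong: if_cong)
  then show ?thesis by (simp add: matrix_matrix_mult_def mat_def vec_eq_iff)
qed

lemma mat_comm1: "(X::complex^'n^'n) ** mat c = mat c ** X"
  unfolding mat_mult_eq mult_mat_eq by (simp add: vec_eq_iff mult.commute)

lemma mat_comm: "(X::complex^'n^'n) ** (mat c ** Y) = mat c ** (X ** Y)"
proof -
  have "X ** (mat c ** Y) = (X ** mat c) ** Y" by (rule matrix_mul_assoc)
  also have "\<dots> = (mat c ** X) ** Y" by (simp only: mat_comm1[of X c])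
  also have "\<dots> = mat c ** (X ** Y)" by (rule matrix_mul_assoc[symmetric])
  finally show ?thesis .
qed

lemma mat_mat: "mat a ** mat b = (mat (a*b) :: complex^'n^'n)"
  unfolding mat_mult_eq by (simp add: vec_eq_iff mat_def)

lemma minv: "invertible (M::complex^'n^'n) \<Longrightarrow> M ** matrix_inv M = mat 1 \<and> matrix_inv M ** M = mat 1"
  unfolding invertible_def matrix_inv_def by (rule someI_ex)

lemma mpow_add: "mpow A (a+b) = mpow A a ** mpow A b"
  by (induction a) (auto simp: matrix_mul_assoc)

lemma mpow_mult: "mpow A (a*b) = mpow (mpow A a) b"
  by (induction b) (auto simp: mpow_add)

lemma mpow_smat: "mpow (mat c ** (A::complex^'n^'n)) m = mat (c^m) ** mpow A m"
proof (induction m)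
  case 0 then show ?case by simp
next
  case (Suc m)
  have "mpow (mat c ** A) (Suc m) = (mat c ** A) ** (mat (c^m) ** mpow A m)" using Suc by simp
  also have "\<dots> = mat c ** (A ** (mat (c^m) ** mpow A m))" by (simp add: matrix_mul_assoc)
  also have "\<dots> = mat c ** (mat (c^m) ** (A ** mpow A m))" by (simp only: mat_comm[of A "c^m" "mpow A m"])
  also have "\<dots> = mat (c^Suc m) ** (A ** mpow A m)" by (simp only: matrix_mul_assoc mat_mat power_Suc)
  finally show ?case by simp
qed

lemma det_mpow: "det (mpow (A::complex^'n^'n) m) = det A ^ m"
  by (induction m) (auto simp: det_mul det_I)

lemma mpow_mat: "mpow (mat c :: complex^'n^'n) m = mat (c^m)"
  by (induction m) (auto simp: mat_mat)

lemma psl_class_scale: "c ^ CARD('n) = 1 \<Longrightarrow> psl_class (mat c ** (M::complex^'n^'n)) = psl_class M"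
  unfolding psl_class_def
proof (intro set_eqI iffI)
  fix x assume c: "c ^ CARD('n) = 1" and "x \<in> {mat d ** (mat c ** M) |d. d ^ CARD('n) = 1}"
  then obtain d where "x = mat d ** (mat c ** M)" "d ^ CARD('n) = 1" by auto
  then show "x \<in> {mat c ** M |c. c ^ CARD('n) = 1}"
    using c by (auto simp: matrix_mul_assoc mat_mat power_mult_distrib intro!: exI[of _ "d*c"])
next
  fix x assume c: "c ^ CARD('n) = 1" and "x \<in> {mat d ** M |d. d ^ CARD('n) = 1}"
  then obtain d where d: "x = mat d ** M" "d ^ CARD('n) = 1" by auto
  have c0: "c \<noteq> 0" using c by (cases "c=0") (auto simp: power_0_left)
  have "x = mat (d / c) ** (mat c ** M)" using d c0 by (simp add: matrix_mul_assoc mat_mat)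
  moreover have "(d/c) ^ CARD('n) = 1" using c d by (simp add: power_divide)
  ultimately show "x \<in> {mat d ** (mat c ** M) |d. d ^ CARD('n) = 1}" by blast
qed

lemma self_in_class: "M \<in> psl_class M"
  unfolding psl_class_def by (auto intro!: exI[of _ 1])

lemma in_class: "N \<in> psl_class M \<Longrightarrow> \<exists>c. c ^ CARD('n) = 1 \<and> N = mat c ** (M::complex^'n^'n)"
  unfolding psl_class_def by auto



definition pre :: "(complex^'n) set set \<Rightarrow> (complex^'n) set" where
  "pre U = {v. v \<noteq> 0 \<and> cline v \<in> U}"

lemma istop_proj: "istopology (\<lambda>U::(complex^'n) set set. U \<subseteq> projspace \<and> open {v. v \<noteq> 0 \<and> cline v \<in> U})"
proof -
  have 1: "S \<inter> T \<subseteq> projspace \<and> open {v. v \<noteq> 0 \<and> cline v \<in> S \<inter> T}"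
    if "S \<subseteq> projspace \<and> open {v. v \<noteq> 0 \<and> cline v \<in> S}" "T \<subseteq> projspace \<and> open {v. v \<noteq> 0 \<and> cline v \<in> T}"
    for S T :: "(complex^'n) set set"
  proof -
    have "{v. v \<noteq> 0 \<and> cline v \<in> S \<inter> T} = {v. v \<noteq> 0 \<and> cline v \<in> S} \<inter> {v. v \<noteq> 0 \<and> cline v \<in> T}" by auto
    then show ?thesis using that by auto
  qed
  have 2: "\<Union>KK \<subseteq> projspace \<and> open {v. v \<noteq> 0 \<and> cline v \<in> \<Union>KK}"
    if H: "\<forall>K\<in>KK. K \<subseteq> projspace \<and> open {v. v \<noteq> 0 \<and> cline v \<in> K}"
    for KK :: "(complex^'n) set set set"
  proof -
    have "{v. v \<noteq> 0 \<and> cline v \<in> \<Union>KK} = \<Union>((\<lambda>S. {v. v \<noteq> 0 \<and> cline v \<in> S}) ` KK)" by auto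
    then show ?thesis using H by auto
  qed
  show ?thesis unfolding istopology_def using 1 2 by blast
qed

lemma openin_proj: "openin proj_topology U \<longleftrightarrow> U \<subseteq> projspace \<and> open (pre U)"
  unfolding proj_topology_def pre_def by (subst topology_inverse'[OF istop_proj]) (rule refl)

lemma topspace_proj: "topspace proj_topology = projspace"
proof -
  have e: "pre (projspace::(complex^'n) set set) = -{0}" unfolding pre_def projspace_def by auto
  have "open (pre (projspace::(complex^'n) set set))" unfolding e by (rule open_Compl) (rule closed_singleton)
  then have "openin proj_topology (projspace::(complex^'n) set set)" unfolding openin_proj by simp
  then show ?thesis unfolding topspace_def using openin_proj by auto
qed

lemma mv_scale: "(M::complex^'n^'n) *v (c *s v) = c *s (M *v v)"
  by (simp add: matrix_vector_mult_def vec_eq_iff sum_distrib_left algebra_simps)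

lemma cline_scale: "c \<noteq> 0 \<Longrightarrow> cline (c *s v) = cline (v::complex^'n)"
  unfolding cline_def
proof (intro set_eqI iffI)
  fix x assume "c \<noteq> 0" "x \<in> {d *s (c *s v) |d. True}"
  then show "x \<in> {d *s v |d. True}" by (auto simp: vector_smult_assoc)
next
  fix x assume c: "c \<noteq> 0" "x \<in> {d *s v |d. True}"
  then obtain d where "x = d *s v" by auto
  then have "x = (d / c) *s (c *s v)" using c by (simp add: vector_smult_assoc)
  then show "x \<in> {d *s (c *s v) |d. True}" by blast
qed

lemma image_cline: "(\<lambda>w. (M::complex^'n^'n) *v w) ` cline v = cline (M *v v)"
  unfolding cline_def
proof (intro set_eqI iffI)
  fix x assume "x \<in> (*v) M ` {c *s v |c. True}"
  then show "x \<in> {c *s (M *v v) |c. True}" by (auto simp: mv_scale)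
next
  fix x assume "x \<in> {c *s (M *v v) |c. True}"
  then obtain c where "x = c *s (M *v v)" by auto
  then have "x = M *v (c *s v)" by (simp add: mv_scale)
  then show "x \<in> (*v) M ` {c *s v |c. True}" by blast
qed

lemma limit_cline:
  assumes v: "v \<noteq> 0" and w: "w \<longlonglongrightarrow> v"
  shows "limitin proj_topology (\<lambda>k. cline (w k :: complex^'n)) (cline v) sequentially"
  unfolding limitin_def
proof (intro conjI allI impI)
  show "cline v \<in> topspace proj_topology" unfolding topspace_proj projspace_def using v by auto
next
  fix U assume "openin proj_topology U \<and> cline v \<in> U"
  then have "open (pre U)" "v \<in> pre U" using v unfolding openin_proj pre_def by auto
  then have "eventually (\<lambda>k. w k \<in> pre U) sequentially" using w topological_tendstoD by blast
  then show "eventually (\<lambda>k. cline (w k) \<in> U) sequentially"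
    by (rule eventually_mono) (auto simp: pre_def)
qed



lemma norm_vec_le_sum: "norm (x::'a::real_normed_vector^'n) \<le> (\<Sum>i\<in>UNIV. norm (x$i))"
  by (simp add: norm_vec_def L2_set_le_sum)

lemma entry_prod_bound:
  assumes "\<And>i j. cmod (M$i$j) \<le> a" "\<And>i j. cmod (N$i$j) \<le> b"
  shows "cmod (((M::complex^'n^'n) ** N)$i$j) \<le> real CARD('n) * (a * b)"
proof -
  have "cmod ((M ** N)$i$j) = cmod (\<Sum>k\<in>UNIV. M$i$k * N$k$j)" by (simp add: matrix_matrix_mult_def)
  also have "\<dots> \<le> (\<Sum>k\<in>UNIV. cmod (M$i$k * N$k$j))" by (rule norm_sum)
  also have "\<dots> \<le> (\<Sum>k\<in>(UNIV::'n set). a * b)"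
    by (rule sum_mono) (simp add: norm_mult mult_mono' assms)
  finally show ?thesis by simp
qed

lemma norm_mat_bound:
  assumes "\<And>i j. cmod (M$i$j) \<le> a"
  shows "norm (M::complex^'n^'n) \<le> real CARD('n) * (real CARD('n) * a)"
proof -
  have "norm M \<le> (\<Sum>i\<in>UNIV. norm (M$i))" by (rule norm_vec_le_sum)
  also have "\<dots> \<le> (\<Sum>i\<in>(UNIV::'n set). \<Sum>j\<in>(UNIV::'n set). cmod (M$i$j))"
    by (rule sum_mono) (rule norm_vec_le_sum)
  also have "\<dots> \<le> (\<Sum>i\<in>(UNIV::'n set). \<Sum>j\<in>(UNIV::'n set). a)"
    by (intro sum_mono assms)
  finally show ?thesis by simp
qed

lemma diag_pow:
  assumes "\<And>i j. i \<noteq> j \<Longrightarrow> (D::complex^'n^'n)$i$j = 0"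
  shows "(mpow D m)$i$j = (if i = j then (D$i$i)^m else 0)"
proof (induction m arbitrary: i j)
  case 0 then show ?case by (simp add: mat_def)
next
  case (Suc m)
  have "(mpow D (Suc m))$i$j = (\<Sum>k\<in>UNIV. D$i$k * (mpow D m)$k$j)" by (simp add: matrix_matrix_mult_def)
  also have "\<dots> = (\<Sum>k\<in>UNIV. (if k = i then D$i$i * (mpow D m)$i$j else 0))"
    by (rule sum.cong) (auto simp: assms)
  also have "\<dots> = D$i$i * (mpow D m)$i$j" by simp
  finally show ?case using Suc by simp
qed

lemma bounded_pow:
  fixes A :: "complex^'n^'n"
  assumes "mat_diagonalizable A" "\<forall>c. mat_eigenvalue A c \<longrightarrow> cmod c = 1"
  shows "bounded (range (mpow A))"
proof -
  obtain P D :: "complex^'n^'n" where P: "invertible P" and D0: "\<forall>i j. i \<noteq> j \<longrightarrow> D $ i $ j = 0"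
    and AP: "A = P ** D ** matrix_inv P"
    using assms(1) unfolding mat_diagonalizable_def by blast
  have D: "\<And>i j. i \<noteq> j \<Longrightarrow> D $ i $ j = 0" using D0 by blast
  define Q where "Q = matrix_inv P"
  have QP: "Q ** P = mat 1" "P ** Q = mat 1" using minv[OF P] Q_def by auto
  have Dv: "D *v axis i 1 = D$i$i *s axis i 1" for i
  proof -
    have "(D *v axis i 1)$j = D$i$i * (axis i 1)$j" for j
    proof -
      have "(D *v axis i 1)$j = (\<Sum>k\<in>UNIV. D$j$k * (axis i 1)$k)" by (simp add: matrix_vector_mult_def)
      also have "\<dots> = D$j$i" by (simp add: axis_def if_distrib[where f="\<lambda>x. _ * x"] cong: if_cong)
      also have "\<dots> = D$i$i * (axis i 1)$j" using D by (cases "i = j") (auto simp: axis_def)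
      finally show ?thesis .
    qed
    then show ?thesis by (simp add: vec_eq_iff)
  qed
  have unit: "cmod (D$i$i) = 1" for i
  proof -
    let ?v = "P *v axis i 1"
    have "A *v ?v = P *v (D *v ((Q ** P) *v axis i 1))"
      by (simp add: AP Q_def[symmetric] matrix_vector_mul_assoc matrix_mul_assoc)
    also have "\<dots> = D$i$i *s ?v" by (simp add: QP Dv mv_scale)
    finally have "A *v ?v = D$i$i *s ?v" .
    moreover have "?v \<noteq> 0"
    proof
      assume "?v = 0"
      then have "Q *v ?v = 0" by simp
      then have "axis i (1::complex) = 0" by (simp add: matrix_vector_mul_assoc QP)
      then show False by (simp add: axis_eq_0_iff)
    qed
    ultimately have "mat_eigenvalue A (D$i$i)" unfolding mat_eigenvalue_def by blast
    then show ?thesis using assms(2) by blast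
  qed
  have powA: "mpow A m = P ** mpow D m ** Q" for m
  proof (induction m)
    case 0 then show ?case using QP by simp
  next
    case (Suc m)
    have "mpow A (Suc m) = (P ** D ** Q) ** (P ** mpow D m ** Q)" using Suc AP Q_def by simp
    also have "\<dots> = P ** D ** (Q ** P) ** mpow D m ** Q" by (simp add: matrix_mul_assoc)
    also have "\<dots> = P ** mpow D (Suc m) ** Q" by (simp add: QP matrix_mul_assoc)
    finally show ?case .
  qed
  have Db: "cmod ((mpow D m)$i$j) \<le> 1" for m i j
    using diag_pow[OF D] unit by (simp add: norm_power)
  define C where "C = real CARD('n) * (real CARD('n) * (norm P * 1) * norm Q)"
  have ent: "cmod (M$i$j) \<le> norm M" for M :: "complex^'n^'n" and i j
    using Finite_Cartesian_Product.norm_nth_le[of "M$i" j] Finite_Cartesian_Product.norm_nth_le[of M i] by linarith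
  have "cmod ((mpow A m)$i$j) \<le> C" for m i j
  proof -
    have "cmod ((P ** mpow D m)$i$j) \<le> real CARD('n) * (norm P * 1)" for i j
      by (rule entry_prod_bound) (use Db ent in auto)
    then show ?thesis unfolding powA C_def
      by (rule entry_prod_bound) (use ent in auto)
  qed
  then have "norm (mpow A m) \<le> real CARD('n) * (real CARD('n) * C)" for m
    by (rule norm_mat_bound)
  then show ?thesis unfolding bounded_iff by blast
qed

lemma tendsto_mmult:
  assumes "(X \<longlongrightarrow> a) F" "(Y \<longlongrightarrow> b) F"
  shows "((\<lambda>x. (X x :: complex^'n^'n) ** Y x) \<longlongrightarrow> a ** b) F"
  unfolding matrix_matrix_mult_def
  by (intro vec_tendstoI) (simp, intro tendsto_intros assms)

lemma tendsto_mvmult: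
  assumes "(X \<longlongrightarrow> a) F"
  shows "((\<lambda>x. (X x :: complex^'n^'n) *v v) \<longlongrightarrow> a *v v) F"
  unfolding matrix_vector_mult_def
  by (intro vec_tendstoI) (simp, intro tendsto_intros assms)

lemma tendsto_det:
  assumes "(X \<longlongrightarrow> a) F"
  shows "((\<lambda>x. det (X x :: complex^'n^'n)) \<longlongrightarrow> det a) F"
  unfolding det_def by (intro tendsto_intros assms)



fun sub2 :: "(nat \<Rightarrow> nat) \<Rightarrow> nat \<Rightarrow> nat" where
  "sub2 r 0 = 0"
| "sub2 r (Suc k) = 2 * r (sub2 r k) + 1"

lemma recur:
  fixes A :: "complex^'n^'n"
  assumes bd: "bounded (range (mpow A))" and dA: "det A = 1"
  shows "\<exists>d. strict_mono d \<and> (\<forall>k. d k > 0) \<and> ((\<lambda>k. mpow A (d k)) \<longlonglongrightarrow> mat 1)"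
proof -
  obtain E r where r: "strict_mono r" and rl: "(mpow A \<circ> r) \<longlonglongrightarrow> E"
    using bounded_imp_convergent_subsequence[OF bd] by blast
  define s where "s = sub2 r"
  define n where "n k = r (s k)" for k
  have rge: "\<And>j. j \<le> r j" using seq_suble[OF r] .
  have s_mono: "strict_mono s"
    unfolding strict_mono_Suc_iff
  proof
    fix k show "s k < s (Suc k)" using rge[of "s k"] by (simp add: s_def)
  qed
  have nE: "(\<lambda>k. mpow A (n k)) \<longlonglongrightarrow> E"
    using LIMSEQ_subseq_LIMSEQ[OF rl s_mono] by (simp add: n_def o_def)
  have n_grow: "2 * n k < n (Suc k)" for k
    using rge[of "2 * n k + 1"] by (simp add: n_def s_def)
  define dd where "dd k = n (Suc k) - n k" for k
  have dd_pos: "dd k > 0" for k using n_grow[of k] by (simp add: dd_def)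
  have dd_mono: "strict_mono dd"
    unfolding strict_mono_Suc_iff
  proof
    fix k show "dd k < dd (Suc k)" using n_grow[of k] n_grow[of "Suc k"] by (simp add: dd_def)
  qed
  have split: "mpow A (dd k) ** mpow A (n k) = mpow A (n (Suc k))" for k
  proof -
    have "n (Suc k) = dd k + n k" using n_grow[of k] by (simp add: dd_def)
    then show ?thesis by (simp add: mpow_add)
  qed
  have "bounded (range (\<lambda>k. mpow A (dd k)))"
    by (rule bounded_subset[OF bd]) auto
  then obtain F r2 where r2: "strict_mono r2" and r2l: "((\<lambda>k. mpow A (dd k)) \<circ> r2) \<longlonglongrightarrow> F"
    using bounded_imp_convergent_subsequence by blast
  have l1: "(\<lambda>k. mpow A (dd (r2 k)) ** mpow A (n (r2 k))) \<longlonglongrightarrow> F ** E"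
    apply (rule tendsto_mmult)
    using r2l apply (simp add: o_def)
    using LIMSEQ_subseq_LIMSEQ[OF nE r2] by (simp add: o_def)
  have sm: "strict_mono (Suc \<circ> r2)" using r2 by (simp add: strict_mono_def)
  have l2: "(\<lambda>k. mpow A (dd (r2 k)) ** mpow A (n (r2 k))) \<longlonglongrightarrow> E"
    using LIMSEQ_subseq_LIMSEQ[OF nE sm] by (simp add: o_def split)
  have FE: "F ** E = E" using LIMSEQ_unique[OF l1 l2] .
  have "(\<lambda>k. det (mpow A (n k))) \<longlonglongrightarrow> det E" by (rule tendsto_det[OF nE])
  moreover have "(\<lambda>k. det (mpow A (n k))) = (\<lambda>k. 1)" by (simp add: det_mpow dA)
  ultimately have "(\<lambda>k. 1) \<longlonglongrightarrow> det E" by simp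
  then have "det E = 1" using LIMSEQ_unique[OF tendsto_const] by metis
  then have "invertible E" by (simp add: invertible_det_nz)
  then have Ei: "E ** matrix_inv E = mat 1" using minv by blast
  have "F = F ** (E ** matrix_inv E)" by (simp add: Ei)
  also have "\<dots> = (F ** E) ** matrix_inv E" by (rule matrix_mul_assoc)
  also have "\<dots> = mat 1" by (simp add: FE Ei)
  finally have "F = mat 1" .
  then show ?thesis using r2l dd_pos strict_mono_o[OF dd_mono r2]
    by (intro exI[of _ "dd \<circ> r2"]) (auto simp: o_def)
qed



lemma mat_mv: "(mat c :: complex^'n^'n) *v w = c *s w"
proof -
  have "\<And>i. (\<Sum>k\<in>UNIV. (if i = k then c else 0) * w$k) = c * w$i"
    by (simp add: if_distrib[where f="\<lambda>x. x * _"] sum.delta cong: if_cong)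
  then show ?thesis by (simp add: matrix_vector_mult_def mat_def vec_eq_iff)
qed

lemma fin_cyc:
  fixes L :: "complex^'n^'n"
  assumes dL: "det L = 1" and k: "k > 0" and ord: "psl_class (mpow L k) = psl_one"
  shows "finite {psl_class (mzpow L j) | j. True}"
proof -
  have "mat 1 \<in> psl_class (mpow L k)" using ord self_in_class unfolding psl_one_def by metis
  then obtain d where d: "d ^ CARD('n) = 1" "mat 1 = mat d ** mpow L k" using in_class by blast
  have d0: "d \<noteq> 0" using d(1) by (cases "d=0") (auto simp: power_0_left)
  define e where "e = 1 / d"
  have e: "e ^ CARD('n) = 1" using d(1) by (simp add: e_def power_divide)
  have e0: "e \<noteq> 0" using d0 by (simp add: e_def)
  have Lk: "mpow L k = mat e"
  proof -
    have "mat e = mat e ** (mat d ** mpow L k)" by (simp add: d(2)[symmetric])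
    also have "\<dots> = mat (e * d) ** mpow L k" by (simp add: matrix_mul_assoc mat_mat)
    finally show ?thesis using d0 by (simp add: e_def)
  qed
  have posrep: "psl_class (mpow L m) = psl_class (mpow L (m mod k))" for m
  proof -
    define q where "q = m div k"
    have "m = m mod k + k * q" by (simp add: q_def)
    then have "mpow L m = mpow L (m mod k) ** mpow L (k * q)" by (metis mpow_add)
    also have "\<dots> = mpow L (m mod k) ** mat (e ^ q)" by (simp add: mpow_mult Lk mpow_mat)
    also have "\<dots> = mat (e ^ q) ** mpow L (m mod k)" by (rule mat_comm1)
    finally have "mpow L m = mat (e ^ q) ** mpow L (m mod k)" .
    moreover have "(e ^ q) ^ CARD('n) = 1"
    proof -
      have "(e ^ q) ^ CARD('n) = (e ^ CARD('n)) ^ q" by (simp only: power_mult[symmetric] mult.commute)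
      then show ?thesis using e by simp
    qed
    ultimately show ?thesis using psl_class_scale[of "e^q" "mpow L (m mod k)"] by simp
  qed
  have "invertible L" using dL by (simp add: invertible_det_nz)
  then have Li: "matrix_inv L ** L = mat 1" using minv by blast
  define X where "X = mat (1/e) ** mpow L (k - 1)"
  have LX: "L ** X = mat 1"
  proof -
    have "L ** X = mat (1/e) ** (L ** mpow L (k - 1))" unfolding X_def by (rule mat_comm)
    also have "L ** mpow L (k - 1) = mpow L k" using k by (cases k) auto
    finally show ?thesis using e0 by (simp add: Lk mat_mat)
  qed
  have iL: "matrix_inv L = X"
  proof -
    have "matrix_inv L = matrix_inv L ** (L ** X)" by (simp add: LX)
    also have "\<dots> = X" by (simp add: matrix_mul_assoc Li)
    finally show ?thesis .
  qed
  have e1: "((1/e) ^ j) ^ CARD('n) = 1" for j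
  proof -
    have "((1/e) ^ j) ^ CARD('n) = (1 / e ^ CARD('n)) ^ j" by (simp only: power_mult[symmetric] mult.commute power_one_over)
    then show ?thesis using e by simp
  qed
  have negrep: "psl_class (mpow (matrix_inv L) j) = psl_class (mpow L ((k - 1) * j))" for j
    unfolding iL X_def mpow_smat mpow_mult[symmetric] by (rule psl_class_scale[OF e1])
  have "{psl_class (mzpow L j) | j. True} \<subseteq> (\<lambda>r. psl_class (mpow L r)) ` {..<k}"
  proof
    fix x assume "x \<in> {psl_class (mzpow L j) | j. True}"
    then obtain j where x: "x = psl_class (mzpow L j)" by blast
    show "x \<in> (\<lambda>r. psl_class (mpow L r)) ` {..<k}"
    proof (cases "0 \<le> j")
      case True
      then have "x = psl_class (mpow L (nat j))" by (simp add: x mzpow_def)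
      then have "x = psl_class (mpow L (nat j mod k))" using posrep[of "nat j"] by simp
      then show ?thesis using k by auto
    next
      case False
      then have "x = psl_class (mpow (matrix_inv L) (nat (- j)))" by (simp add: x mzpow_def)
      then have "x = psl_class (mpow L ((k - 1) * nat (- j)))" using negrep[of "nat (-j)"] by simp
      then have "x = psl_class (mpow L ((k - 1) * nat (- j) mod k))" using posrep[of "(k - 1) * nat (- j)"] by simp
      then show ?thesis using k by auto
    qed
  qed
  then show ?thesis by (rule finite_subset) simp
qed

lemma cl_empty: "finite \<Gamma> \<Longrightarrow> cluster_points \<Gamma> K = {}"
  unfolding cluster_points_def
proof (intro equals0I)
  fix p assume fin: "finite \<Gamma>" and "p \<in> {p. \<exists>g k. (\<forall>m. g m \<in> \<Gamma>) \<and> inj g \<and> (\<forall>m. k m \<in> K) \<and>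
       limitin proj_topology (\<lambda>m. psl_act (g m) (k m)) p sequentially}"
  then obtain g :: "nat \<Rightarrow> _" where "\<forall>m. g m \<in> \<Gamma>" "inj g" by blast
  then have "finite (range g)" using fin by (meson finite_subset image_subset_iff)
  then show False using \<open>inj g\<close> finite_imageD by blast
qed

lemma inj_aux:
  fixes A :: "complex^'n^'n"
  assumes dA: "det A = 1" and ij: "i < j" and eq: "psl_class (mpow A i) = psl_class (mpow A j)"
  shows "psl_class (mpow A (j - i)) = psl_one"
proof -
  have "mpow A j \<in> psl_class (mpow A i)" using eq self_in_class by metis
  then obtain c where c: "c ^ CARD('n) = 1" "mpow A j = mat c ** mpow A i" using in_class by blast
  have "mpow A j = mpow A (j - i) ** mpow A i" using ij by (metis le_add_diff_inverse2 less_imp_le mpow_add)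
  then have e: "mpow A (j - i) ** mpow A i = mat c ** mpow A i" using c by simp
  have "invertible (mpow A i)" by (simp add: invertible_det_nz det_mpow dA)
  then have Mi: "mpow A i ** matrix_inv (mpow A i) = mat 1" using minv by blast
  have "mpow A (j - i) = (mpow A (j - i) ** mpow A i) ** matrix_inv (mpow A i)"
    by (simp add: matrix_mul_assoc[symmetric] Mi)
  also have "\<dots> = mat c" by (simp add: e matrix_mul_assoc[symmetric] Mi)
  finally have "mpow A (j - i) = mat c ** mat 1" by simp
  then show ?thesis unfolding psl_one_def using psl_class_scale[OF c(1), of "mat 1"] by simp
qed



theorem mainTheorem10:
  fixes \<gamma> :: "(complex^'n^'n) set" and A :: "complex^'n^'n"
  assumes "CARD('n) \<ge> 2"
    and "\<gamma> \<in> PSL"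
    and "det A = 1" and "psl_class A = \<gamma>"
    and "mat_diagonalizable A"
    and "\<forall>c. mat_eigenvalue A c \<longrightarrow> cmod c = 1"
  shows "(psl_finite_order \<gamma> \<longrightarrow> Kulkarni_limit_set (cyclic_subgroup \<gamma>) = {})
       \<and> (\<not> psl_finite_order \<gamma> \<longrightarrow> Kulkarni_limit_set (cyclic_subgroup \<gamma>) = projspace)"
proof -
  define L where "L = psl_lift \<gamma>"
  have hL: "det L = 1 \<and> psl_class L = \<gamma>"
    unfolding L_def psl_lift_def by (rule someI[of _ A]) (use assms in simp)
  then have "L \<in> psl_class A" using assms(4) self_in_class[of L] by simp
  then obtain c where c: "c ^ CARD('n) = 1" "L = mat c ** A" using in_class by blast
  have classpow: "psl_class (mpow L m) = psl_class (mpow A m)" for m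
  proof -
    have "(c ^ m) ^ CARD('n) = (c ^ CARD('n)) ^ m" by (simp only: power_mult[symmetric] mult.commute)
    then have "(c ^ m) ^ CARD('n) = 1" using c by simp
    then show ?thesis unfolding c(2) mpow_smat by (rule psl_class_scale)
  qed
  have cyc: "cyclic_subgroup \<gamma> = {psl_class (mzpow L j) | j. True}"
    unfolding cyclic_subgroup_def psl_zpow_def L_def ..
  show ?thesis
  proof (intro conjI impI)
    assume "psl_finite_order \<gamma>"
    then obtain k where k: "k > 0" "psl_class (mpow L k) = psl_one"
      unfolding psl_finite_order_def L_def by blast
    have fin: "finite (cyclic_subgroup \<gamma>)" unfolding cyc using fin_cyc[OF conjunct1[OF hL] k] .
    show "Kulkarni_limit_set (cyclic_subgroup \<gamma>) = {}"
    proof -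
      have E: "\<Union>{cluster_points (cyclic_subgroup \<gamma>) K | K. compactin proj_topology K \<and> K \<subseteq> projspace - Lambda_set (cyclic_subgroup \<gamma>)} = {}"
        using cl_empty[OF fin] by auto
      then show ?thesis
        unfolding Kulkarni_limit_set_def L2_set_def E by (simp add: Lambda_set_def cl_empty[OF fin])
    qed
  next
    assume inf: "\<not> psl_finite_order \<gamma>"
    have noord: "psl_class (mpow A m) \<noteq> psl_one" if "m > 0" for m
    proof
      assume "psl_class (mpow A m) = psl_one"
      then have "psl_class (mpow (psl_lift \<gamma>) m) = psl_one" using classpow[of m] by (simp add: L_def)
      then show False using inf that unfolding psl_finite_order_def by blast
    qed
    obtain d where d: "strict_mono d" "\<forall>k. d k > 0" "(\<lambda>k. mpow A (d k)) \<longlonglongrightarrow> mat 1"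
      using recur[OF bounded_pow[OF assms(5,6)] assms(3)] by blast
    define g where "g k = psl_class (mpow A (d k))" for k
    have gin: "g k \<in> cyclic_subgroup \<gamma>" for k
    proof -
      have "g k = psl_class (mzpow L (int (d k)))" by (simp add: g_def mzpow_def classpow)
      then show ?thesis unfolding cyc by blast
    qed
    have ginj: "inj g"
    proof (rule injI)
      fix a b assume gab: "g a = g b"
      show "a = b"
      proof (rule ccontr)
        assume "a \<noteq> b"
        then consider "a < b" | "b < a" by linarith
        then show False
        proof cases
          case 1
          then have "d a < d b" using d(1) strict_monoD by blast
          then show False using inj_aux[OF assms(3) _ gab[unfolded g_def]] noord[of "d b - d a"] by simp
        next
          case 2
          then have "d b < d a" using d(1) strict_monoD by blast
          then show False using inj_aux[OF assms(3) _ gab[symmetric, unfolded g_def]] noord[of "d a - d b"] by simp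
        qed
      qed
    qed
    have act: "psl_act (g k) (cline v) = cline (mpow A (d k) *v v)" for k v
    proof -
      have "\<exists>M. M \<in> g k" using self_in_class unfolding g_def by blast
      then have "(SOME M. M \<in> g k) \<in> g k" by (rule someI_ex)
      then obtain e where e: "e ^ CARD('n) = 1" "(SOME M. M \<in> g k) = mat e ** mpow A (d k)"
        unfolding g_def using in_class by blast
      have e0: "e \<noteq> 0" using e(1) by (cases "e=0") (auto simp: power_0_left)
      have "psl_act (g k) (cline v) = cline ((mat e ** mpow A (d k)) *v v)"
        unfolding psl_act_def e(2) by (rule image_cline)
      also have "\<dots> = cline (e *s (mpow A (d k) *v v))"
        by (simp add: matrix_vector_mul_assoc[symmetric] mat_mv)
      also have "\<dots> = cline (mpow A (d k) *v v)" using e0 by (rule cline_scale)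
      finally show ?thesis .
    qed
    have clus: "z \<in> cluster_points (cyclic_subgroup \<gamma>) {z}" if z: "z \<in> projspace" for z
    proof -
      obtain v where v: "v \<noteq> 0" "z = cline v" using z unfolding projspace_def by blast
      have "(\<lambda>k. mpow A (d k) *v v) \<longlonglongrightarrow> mat 1 *v v" by (rule tendsto_mvmult[OF d(3)])
      then have "limitin proj_topology (\<lambda>k. cline (mpow A (d k) *v v)) (cline v) sequentially"
        using limit_cline[OF v(1)] by simp
      then have lim: "limitin proj_topology (\<lambda>m. psl_act (g m) ((\<lambda>_. z) m)) z sequentially"
        by (simp add: act v(2))
      show ?thesis unfolding cluster_points_def
        apply (rule CollectI)
        apply (rule exI[of _ g])
        apply (rule exI[of _ "\<lambda>_. z"])
        using gin ginj lim by simp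
    qed
    have t: "proj_topology closure_of S \<subseteq> projspace" for S :: "(complex^'n) set set"
      by (subst topspace_proj[symmetric]) (rule closure_of_subset_topspace)
    have sub1: "Kulkarni_limit_set (cyclic_subgroup \<gamma>) \<subseteq> projspace"
      unfolding Kulkarni_limit_set_def Lambda_set_def L2_set_def by (rule Un_least) (rule t)+
    have "projspace \<subseteq> Lambda_set (cyclic_subgroup \<gamma>)"
    proof
      fix z :: "(complex^'n) set" assume z: "z \<in> projspace"
      then have "z \<in> topspace proj_topology \<inter> (\<Union>z\<in>projspace. cluster_points (cyclic_subgroup \<gamma>) {z})"
        unfolding topspace_proj using clus[OF z] by (intro IntI UN_I)
      then show "z \<in> Lambda_set (cyclic_subgroup \<gamma>)"
        unfolding Lambda_set_def by (rule subsetD[OF closure_of_subset_Int])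
    qed
    then show "Kulkarni_limit_set (cyclic_subgroup \<gamma>) = projspace"
      using sub1 unfolding Kulkarni_limit_set_def by (intro equalityI) auto
  qed
qed

end
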